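(* Let $\pi,\tau\in\mathfrak{S}_m$. If $\pi$ and $\tau$ are strongly c-Wilf equivalent, then $\mathcal{O}_\pi=\mathcal{O}_\tau$.
   Context: $\mathfrak{S}_n$ is the symmetric group on $[n]$. The standardization $\operatorname{st}(w)$ of a word of distinct integers replaces its smallest entry by 1, the next smallest by 2, etc. For $\pi\in\mathfrak{S}_m$ and $\sigma\in\mathfrak{S}_n$, $\operatorname{Em}(\pi,\sigma)=\{i\in[n-m+1]:\operatorname{st}(\sigma_i\cdots\sigma_{i+m-1})=\pi\}$. Let $a^\pi_{n,k}$ be the number of $\sigma\in\mathfrak{S}_n$ with $|\operatorname{Em}(\pi,\sigma)|=k$; $\pi$ and $\tau$ are strongly c-Wilf equivalent if $a^\pi_{n,k}=a^\tau_{n,k}$ for all $n,k$. The overlap set is $\mathcal{O}_\pi=\{i\in[m-1]:\operatorname{st}(\pi_{i+1}\cdots\pi_m)=\operatorname{st}(\pi_1\cdots\pi_{m-i})\}$. *)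

theory Defs
  imports Main
begin

(* Permutations of [n] are represented in one-line notation as lists of naturals. *)
definition perms :: "nat \<Rightarrow> nat list set" where
  "perms n = {w. distinct w \<and> set w = {1..n}}"

definition st :: "nat list \<Rightarrow> nat list" where
  "st w = map (\<lambda>x. card {y \<in> set w. y \<le> x}) w"

(* Em(pi, sigma): positions i in [n-m+1] (1-indexed) where the consecutive
   factor sigma_i ... sigma_{i+m-1} standardizes to pi. *)
definition Em :: "nat list \<Rightarrow> nat list \<Rightarrow> nat set" where
  "Em p s = {i. 1 \<le> i \<and> i + length p \<le> length s + 1 \<and>
                st (take (length p) (drop (i - 1) s)) = p}"

definition a_num :: "nat list \<Rightarrow> nat \<Rightarrow> nat \<Rightarrow> nat" where
  "a_num p n k = card {s \<in> perms n. card (Em p s) = k}"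

definition strongly_cwilf_equiv :: "nat list \<Rightarrow> nat list \<Rightarrow> bool" where
  "strongly_cwilf_equiv p t \<longleftrightarrow> (\<forall>n k. a_num p n k = a_num t n k)"

definition overlaps :: "nat list \<Rightarrow> nat set" where
  "overlaps p = {i \<in> {1..length p - 1}.
                   st (drop i p) = st (take (length p - i) p)}"

end

theory Submission imports Defs begin

definition rk :: "nat list \<Rightarrow> nat \<Rightarrow> nat" where
  "rk w x = card {y \<in> set w. y \<le> x}"

lemma st_rk: "st w = map (rk w) w"
  by (simp add: st_def rk_def)

lemma rk_less: "x \<in> set w \<Longrightarrow> y \<in> set w \<Longrightarrow> x < y \<Longrightarrow> rk w x < rk w y"
  unfolding rk_def
proof (rule psubset_card_mono)
  assume "x \<in> set w" "y \<in> set w" "x < y"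
  then show "{y \<in> set w. y \<le> x} \<subset> {ya \<in> set w. ya \<le> y}" by force
qed simp

lemma rk_mono: "strict_mono_on (set w) (rk w)"
  by (simp add: rk_less strict_mono_onI)

lemma st_map_mono:
  assumes "strict_mono_on (set w) f"
  shows "st (map f w) = st w"
proof -
  have inj: "inj_on f (set w)" using assms strict_mono_on_imp_inj_on by blast
  have "card {y \<in> f ` set w. y \<le> f x} = card {y \<in> set w. y \<le> x}" if "x \<in> set w" for x
  proof -
    have "{y \<in> f ` set w. y \<le> f x} = f ` {y \<in> set w. y \<le> x}"
      using strict_mono_on_less_eq[OF assms _ that] by auto
    moreover have "inj_on f {y \<in> set w. y \<le> x}" using inj by (rule inj_on_subset) auto
    ultimately show ?thesis by (simp add: card_image)
  qed
  then show ?thesis by (simp add: st_def)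
qed

lemma st_rk_sub: "set u \<subseteq> set w \<Longrightarrow> st (map (rk w) u) = st u"
  by (rule st_map_mono) (auto intro!: strict_mono_onI rk_less)

lemma st_take_st: "st (take k (st w)) = st (take k w)"
proof -
  have "take k (st w) = map (rk w) (take k w)" by (simp add: st_rk take_map)
  then show ?thesis using st_rk_sub set_take_subset by metis
qed

lemma st_drop_st: "st (drop k (st w)) = st (drop k w)"
proof -
  have "drop k (st w) = map (rk w) (drop k w)" by (simp add: st_rk drop_map)
  then show ?thesis using st_rk_sub set_drop_subset by metis
qed

lemma st_take_drop_st: "st (take k (drop d (st w))) = st (take k (drop d w))"
proof -
  have "take k (drop d (st w)) = map (rk w) (take k (drop d w))" by (simp add: st_rk drop_map take_map)
  moreover have "set (take k (drop d w)) \<subseteq> set w"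
    by (meson order_trans set_drop_subset set_take_subset)
  ultimately show ?thesis using st_rk_sub by metis
qed

lemma length_st[simp]: "length (st w) = length w"
  by (simp add: st_def)

lemma nth_st: "i < length w \<Longrightarrow> st w ! i = rk w (w ! i)"
  by (simp add: st_rk)

lemma st_less_iff: "i < length w \<Longrightarrow> j < length w \<Longrightarrow> (st w ! i < st w ! j) = (w ! i < w ! j)"
  by (simp add: nth_st strict_mono_on_less[OF rk_mono])

lemma perms_length: "p \<in> perms n \<Longrightarrow> length p = n"
  unfolding perms_def using distinct_card by fastforce

lemma perms_nth: "p \<in> perms n \<Longrightarrow> i < n \<Longrightarrow> p ! i \<in> {1..n}"
  unfolding perms_def using perms_length
  by (metis (mono_tags, lifting) mem_Collect_eq nth_mem perms_def)

lemma st_perms: assumes "distinct w" shows "st w \<in> perms (length w)"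
proof -
  have inj: "inj_on (rk w) (set w)" using rk_mono strict_mono_on_imp_inj_on by blast
  have sub: "rk w ` set w \<subseteq> {1..length w}"
  proof
    fix z assume "z \<in> rk w ` set w"
    then obtain x where x: "x \<in> set w" "z = rk w x" by auto
    have "{y \<in> set w. y \<le> x} \<noteq> {}" using x by auto
    then have "z \<ge> 1" using x unfolding rk_def by (simp add: Suc_leI card_gt_0_iff)
    moreover have "z \<le> card (set w)" unfolding x rk_def by (rule card_mono) auto
    ultimately show "z \<in> {1..length w}" using distinct_card[OF assms] by auto
  qed
  have "card (rk w ` set w) = length w" using card_image[OF inj] distinct_card[OF assms] by simp
  then have "rk w ` set w = {1..length w}" using sub by (intro card_subset_eq) auto
  moreover have "distinct (st w)" using assms inj by (simp add: st_rk distinct_map)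
  ultimately show ?thesis by (simp add: perms_def st_rk)
qed

lemma card_set_filter_nth:
  assumes "distinct u"
  shows "card {y \<in> set u. P y} = card {k. k < length u \<and> P (u ! k)}"
proof -
  have "{y \<in> set u. P y} = (\<lambda>k. u ! k) ` {k. k < length u \<and> P (u ! k)}"
    by (auto simp: in_set_conv_nth)
  moreover have "inj_on (\<lambda>k. u ! k) {k. k < length u \<and> P (u ! k)}"
    using assms by (auto simp: inj_on_def nth_eq_iff_index_eq)
  ultimately show ?thesis by (simp add: card_image)
qed

lemma st_eqI:
  assumes p: "p \<in> perms (length u)"
    and mono: "\<And>i j. i < length u \<Longrightarrow> j < length u \<Longrightarrow> p ! i < p ! j \<Longrightarrow> u ! i < u ! j"
  shows "st u = p"
proof -
  have dp: "distinct p" using p by (simp add: perms_def)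
  have iff: "(u ! i < u ! j) = (p ! i < p ! j)" if "i < length u" "j < length u" for i j
  proof
    assume "u ! i < u ! j"
    then have "i \<noteq> j" by auto
    then have "p ! i \<noteq> p ! j" using dp that perms_length[OF p] by (simp add: nth_eq_iff_index_eq)
    then show "p ! i < p ! j" using mono[OF that(2,1)] \<open>u ! i < u ! j\<close> by fastforce
  qed (rule mono[OF that])
  have du: "distinct u"
  proof (subst distinct_conv_nth, intro allI impI)
    fix i j assume "i < length u" "j < length u" "i \<noteq> j"
    then have "p ! i \<noteq> p ! j" using dp perms_length[OF p] by (simp add: nth_eq_iff_index_eq)
    then show "u ! i \<noteq> u ! j" using iff \<open>i < length u\<close> \<open>j < length u\<close>
      by (metis linorder_neqE_nat less_irrefl)
  qed
  show ?thesis
  proof (rule nth_equalityI)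
    show "length (st u) = length p" using perms_length[OF p] by simp
    fix i assume i: "i < length (st u)"
    then have i': "i < length u" by simp
    have "st u ! i = card {k. k < length u \<and> u ! k \<le> u ! i}"
      using i' by (simp add: nth_st rk_def card_set_filter_nth[OF du])
    also have "\<dots> = card {k. k < length u \<and> p ! k \<le> p ! i}"
      using iff i' by (metis not_le)
    also have "\<dots> = card {y \<in> set p. y \<le> p ! i}"
      using card_set_filter_nth[OF dp] perms_length[OF p] by simp
    also have "{y \<in> set p. y \<le> p ! i} = {1..p ! i}"
      using p perms_nth[OF p] i' perms_length[OF p] by (auto simp: perms_def intro: order_trans)
    finally show "st u ! i = p ! i" by simp
  qed
qed

lemma st_perm_id: "p \<in> perms n \<Longrightarrow> st p = p"
  by (rule st_eqI) (auto simp: perms_length)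

definition win :: "nat \<Rightarrow> nat \<Rightarrow> nat list \<Rightarrow> nat list" where
  "win j L s = take L (drop j s)"

definition repl :: "nat \<Rightarrow> nat \<Rightarrow> nat list \<Rightarrow> nat list \<Rightarrow> nat list" where
  "repl j L s w = take j s @ w @ drop (j + L) s"

definition fib :: "nat \<Rightarrow> nat \<Rightarrow> nat \<Rightarrow> nat list \<Rightarrow> nat list set" where
  "fib n j L q = {s \<in> perms n. st (win j L s) = q}"

definition Xs :: "nat \<Rightarrow> nat \<Rightarrow> nat \<Rightarrow> nat list set" where
  "Xs n j L = {s \<in> perms n. sorted (win j L s)}"

lemma length_win: "j + L \<le> length s \<Longrightarrow> length (win j L s) = L"
  by (simp add: win_def)

lemma win_repl: "j + L \<le> length s \<Longrightarrow> length w = L \<Longrightarrow> win j L (repl j L s w) = w"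
  by (simp add: win_def repl_def)

lemma repl_repl: "j + L \<le> length s \<Longrightarrow> length w = L \<Longrightarrow> repl j L (repl j L s w) w' = repl j L s w'"
  by (simp add: repl_def)

lemma repl_win: "repl j L s (win j L s) = s"
  by (simp add: repl_def win_def) (metis add.commute append_take_drop_id drop_drop)

lemma repl_perms:
  assumes s: "s \<in> perms n" and jL: "j + L \<le> n" and dw: "distinct w"
    and sw: "set w = set (win j L s)"
  shows "repl j L s w \<in> perms n"
proof -
  have "distinct (repl j L s (win j L s))" using s by (simp add: repl_win perms_def)
  then have "distinct (repl j L s w)" using dw sw by (simp add: repl_def)
  moreover have "set (repl j L s w) = set (repl j L s (win j L s))" using sw by (simp add: repl_def)
  ultimately show ?thesis using s by (simp add: repl_win perms_def)
qed

lemma perms_distinct: "s \<in> perms n \<Longrightarrow> distinct s"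
  by (simp add: perms_def)

lemma distinct_win: "distinct s \<Longrightarrow> distinct (win j L s)"
  by (simp add: win_def)

lemma sort_nth_rk:
  assumes "distinct w" "x \<in> set w"
  shows "sort w ! (rk w x - 1) = x"
proof -
  let ?s = "sort w"
  have ss: "sorted_wrt (<) ?s" using assms by (simp add: strict_sorted_iff)
  have ds: "distinct ?s" using assms by simp
  obtain k where k: "k < length ?s" "x = ?s ! k" using assms by (metis in_set_conv_nth set_sort)
  have le_iff: "(?s ! i \<le> ?s ! k) = (i \<le> k)" if "i < length ?s" for i
    using sorted_wrt_nth_less[OF ss, of i k] sorted_wrt_nth_less[OF ss, of k i] that k(1)
    by (metis le_less linorder_neqE_nat not_le)
  have "rk w x = card {y \<in> set ?s. y \<le> ?s ! k}" using k by (simp add: rk_def)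
  also have "\<dots> = card {i. i < length ?s \<and> ?s ! i \<le> ?s ! k}" by (rule card_set_filter_nth[OF ds])
  also have "{i. i < length ?s \<and> ?s ! i \<le> ?s ! k} = {..k}" using le_iff k(1) by auto
  finally show ?thesis using k by simp
qed

lemma map_sort_st: "distinct w \<Longrightarrow> map (\<lambda>k. sort w ! (k - 1)) (st w) = w"
  by (rule nth_equalityI) (auto simp: nth_st, metis One_nat_def nth_mem sort_nth_rk)

lemma map_q_props:
  assumes ss: "sorted_wrt (<) s" and ls: "length s = L" and q: "q \<in> perms L"
  shows "st (map (\<lambda>k. s ! (k - 1)) q) = q" "distinct (map (\<lambda>k. s ! (k - 1)) q)"
    "set (map (\<lambda>k. s ! (k - 1)) q) = set s" "length (map (\<lambda>k. s ! (k - 1)) q) = L"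
proof -
  have lq: "length q = L" using q by (rule perms_length)
  have qn: "q ! i \<in> {1..L}" if "i < L" for i using perms_nth[OF q that] .
  have sq: "set q = {1..L}" using q by (simp add: perms_def)
  show "st (map (\<lambda>k. s ! (k - 1)) q) = q"
  proof (rule st_eqI)
    show "q \<in> perms (length (map (\<lambda>k. s ! (k - 1)) q))" using q lq by simp
    fix i j assume "i < length (map (\<lambda>k. s ! (k - 1)) q)" "j < length (map (\<lambda>k. s ! (k - 1)) q)"
      "q ! i < q ! j"
    then show "map (\<lambda>k. s ! (k - 1)) q ! i < map (\<lambda>k. s ! (k - 1)) q ! j"
      using qn[of i] qn[of j] lq ls sorted_wrt_nth_less[OF ss, of "q ! i - 1" "q ! j - 1"]
      by auto
  qed
  have inj: "inj_on (\<lambda>k. s ! (k - 1)) {1..L}"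
  proof (rule inj_onI)
    fix a b assume "a \<in> {1..L}" "b \<in> {1..L}" "s ! (a - 1) = s ! (b - 1)"
    moreover have "distinct s" using ss by (simp add: strict_sorted_iff)
    ultimately show "a = b" using ls by (auto simp: nth_eq_iff_index_eq)
  qed
  show "distinct (map (\<lambda>k. s ! (k - 1)) q)"
    using q inj sq by (simp add: distinct_map perms_def)
  show "set (map (\<lambda>k. s ! (k - 1)) q) = set s"
  proof
    show "set (map (\<lambda>k. s ! (k - 1)) q) \<subseteq> set s" using sq ls by auto
    show "set s \<subseteq> set (map (\<lambda>k. s ! (k - 1)) q)"
    proof
      fix x assume "x \<in> set s"
      then obtain i where "i < L" "x = s ! i" using ls by (metis in_set_conv_nth)
      then have "Suc i \<in> set q" "x = s ! (Suc i - 1)" using sq by auto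
      then show "x \<in> set (map (\<lambda>k. s ! (k - 1)) q)" by (auto intro!: image_eqI[where x="Suc i"])
    qed
  qed
  show "length (map (\<lambda>k. s ! (k - 1)) q) = L" using lq by simp
qed

lemma card_fib:
  assumes q: "q \<in> perms L" and jL: "j + L \<le> n"
  shows "card (fib n j L q) = card (Xs n j L)"
proof -
  define f where "f s = repl j L s (sort (win j L s))" for s
  define g where "g t = repl j L t (map (\<lambda>k. win j L t ! (k - 1)) q)" for t
  have bij: "bij_betw f (fib n j L q) (Xs n j L)"
  proof (rule bij_betw_byWitness[where f' = g])
    show "\<forall>a\<in>fib n j L q. g (f a) = a"
    proof
      fix a assume a: "a \<in> fib n j L q"
      have la: "length a = n" using a by (simp add: fib_def perms_length)
      have dw: "distinct (win j L a)" using a unfolding fib_def by (auto intro: distinct_win perms_distinct)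
      have lw: "length (win j L a) = L" using la jL by (simp add: length_win)
      have "win j L (f a) = sort (win j L a)" unfolding f_def using la jL lw by (simp add: win_repl)
      then have "map (\<lambda>k. win j L (f a) ! (k - 1)) q = win j L a"
        using a map_sort_st[OF dw] by (simp add: fib_def)
      then show "g (f a) = a" unfolding g_def f_def using la jL lw
        by (simp add: repl_repl repl_win)
    qed
    show "\<forall>a\<in>Xs n j L. f (g a) = a"
    proof
      fix a assume a: "a \<in> Xs n j L"
      have la: "length a = n" using a by (simp add: Xs_def perms_length)
      have dw: "distinct (win j L a)" using a unfolding Xs_def by (auto intro: distinct_win perms_distinct)
      have lw: "length (win j L a) = L" using la jL by (simp add: length_win)
      have ss: "sorted_wrt (<) (win j L a)" using a dw by (simp add: Xs_def strict_sorted_iff)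
      note mp = map_q_props[OF ss lw q]
      have "sort (map (\<lambda>k. win j L a ! (k - 1)) q) = win j L a"
        using mp a dw by (intro sorted_distinct_set_unique) (auto simp: Xs_def)
      then show "f (g a) = a" unfolding g_def f_def using la jL mp(4)
        by (simp add: win_repl repl_repl repl_win)
    qed
    show "f ` fib n j L q \<subseteq> Xs n j L"
    proof
      fix b assume "b \<in> f ` fib n j L q"
      then obtain a where a: "a \<in> fib n j L q" "b = f a" by auto
      have la: "length a = n" using a by (simp add: fib_def perms_length)
      have dw: "distinct (win j L a)" using a unfolding fib_def by (auto intro: distinct_win perms_distinct)
      have lw: "length (win j L a) = L" using la jL by (simp add: length_win)
      have "f a \<in> perms n" unfolding f_def using a dw jL
        by (intro repl_perms) (auto simp: fib_def)
      moreover have "win j L (f a) = sort (win j L a)" unfolding f_def using la jL lw by (simp add: win_repl)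
      ultimately show "b \<in> Xs n j L" using a by (simp add: Xs_def)
    qed
    show "g ` Xs n j L \<subseteq> fib n j L q"
    proof
      fix b assume "b \<in> g ` Xs n j L"
      then obtain a where a: "a \<in> Xs n j L" "b = g a" by auto
      have la: "length a = n" using a by (simp add: Xs_def perms_length)
      have dw: "distinct (win j L a)" using a unfolding Xs_def by (auto intro: distinct_win perms_distinct)
      have lw: "length (win j L a) = L" using la jL by (simp add: length_win)
      have ss: "sorted_wrt (<) (win j L a)" using a dw by (simp add: Xs_def strict_sorted_iff)
      note mp = map_q_props[OF ss lw q]
      have "g a \<in> perms n" unfolding g_def using a mp jL
        by (intro repl_perms) (auto simp: Xs_def)
      moreover have "win j L (g a) = map (\<lambda>k. win j L a ! (k - 1)) q"
        unfolding g_def using la jL mp(4) by (simp add: win_repl)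
      ultimately show "b \<in> fib n j L q" using a mp(1) by (simp add: fib_def)
    qed
  qed
  then show ?thesis by (rule bij_betw_same_card)
qed

definition Q :: "nat list \<Rightarrow> nat \<Rightarrow> nat list set" where
  "Q p d = {q \<in> perms (length p + d). st (take (length p) q) = p \<and>
              st (take (length p) (drop d q)) = p}"

lemma finite_perms: "finite (perms n)"
proof (rule finite_subset)
  show "perms n \<subseteq> {xs. set xs \<subseteq> {1..n} \<and> length xs = n}"
    by (auto simp: perms_length) (auto simp: perms_def)
qed (rule finite_lists_length_eq, simp)

lemma finite_Q: "finite (Q p d)"
  unfolding Q_def using finite_perms by simp

lemma em_pair_iff:
  assumes s: "s \<in> perms n" and i: "1 \<le> i" and b: "i - 1 + length p + d \<le> n"
  shows "(i \<in> Em p s \<and> i + d \<in> Em p s) = (st (win (i - 1) (length p + d) s) \<in> Q p d)"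
proof -
  let ?m = "length p"
  let ?w = "win (i - 1) (?m + d) s"
  have ls: "length s = n" using s by (rule perms_length)
  have dw: "distinct ?w" using s by (intro distinct_win perms_distinct)
  have lw: "length ?w = ?m + d" using ls b by (simp add: length_win)
  have "st ?w \<in> perms (?m + d)" using st_perms[OF dw] lw by simp
  moreover have "st (take ?m (st ?w)) = st (take ?m (drop (i - 1) s))"
    by (simp add: st_take_st win_def)
  moreover have "st (take ?m (drop d (st ?w))) = st (take ?m (drop (i + d - 1) s))"
  proof -
    have "take ?m (drop d ?w) = take ?m (drop (i + d - 1) s)"
      using i by (simp add: win_def drop_take add.commute)
    then show ?thesis by (simp add: st_take_drop_st)
  qed
  ultimately show ?thesis using i b ls unfolding Em_def Q_def by auto
qed

lemma card_pairs:
  assumes i: "1 \<le> i" and b: "i - 1 + length p + d \<le> n"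
  shows "card {s \<in> perms n. i \<in> Em p s \<and> i + d \<in> Em p s}
         = card (Q p d) * card (Xs n (i - 1) (length p + d))"
proof -
  let ?j = "i - 1" and ?L = "length p + d"
  have "{s \<in> perms n. i \<in> Em p s \<and> i + d \<in> Em p s} = (\<Union>q\<in>Q p d. fib n ?j ?L q)"
    using em_pair_iff[OF _ i b] by (auto simp: fib_def)
  then have "card {s \<in> perms n. i \<in> Em p s \<and> i + d \<in> Em p s} = (\<Sum>q\<in>Q p d. card (fib n ?j ?L q))"
    using finite_Q finite_perms by (simp only:) (rule card_UN_disjoint, auto simp: fib_def)
  also have "\<dots> = (\<Sum>q\<in>Q p d. card (Xs n ?j ?L))"
    by (rule sum.cong) (use b in \<open>auto simp: Q_def intro!: card_fib\<close>)
  finally show ?thesis by simp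
qed

lemma overlap_Q:
  assumes p: "p \<in> perms m" and d: "1 \<le> d" "d < m" and ov: "st (drop d p) = st (take (m - d) p)"
  shows "Q p d \<noteq> {}"
proof -
  have lp: "length p = m" using p by (rule perms_length)
  have pr: "1 \<le> p ! i \<and> p ! i \<le> m" if "i < m" for i using perms_nth[OF p that] by simp
  have ovl: "p ! (d + i) < p ! (d + j)" if "i < m - d" "j < m - d" "p ! i < p ! j" for i j
  proof -
    have "take (m - d) p ! i < take (m - d) p ! j" using that lp by simp
    then have "st (take (m - d) p) ! i < st (take (m - d) p) ! j"
      using that lp by (subst st_less_iff) auto
    then have "st (drop d p) ! i < st (drop d p) ! j" using ov by simp
    then have "drop d p ! i < drop d p ! j" using that lp by (subst (asm) st_less_iff) auto
    then show ?thesis using that lp by simp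
  qed
  define M where "M = m + 1"
  define A where "A x = {p ! (i + d) | i. i < m - d \<and> p ! i < x}" for x
  define h where "h x = Max (insert 0 (A x))" for x
  define kf where "kf a = (if a < m then p ! a * M else h (p ! (a - d)) * M + p ! (a - d))" for a
  define K where "K = map kf [0..<m + d]"
  have finA: "finite (A x)" for x
  proof (rule finite_subset)
    show "A x \<subseteq> (\<lambda>i. p ! (i + d)) ` {..<m - d}" unfolding A_def by auto
  qed simp
  have h_ge: "p ! (i + d) \<le> h x" if "i < m - d" "p ! i < x" for i x
    unfolding h_def using finA[of x] that by (intro Max_ge) (auto simp: A_def)
  have h_lt: "h x < b" if "\<And>i. i < m - d \<Longrightarrow> p ! i < x \<Longrightarrow> p ! (i + d) < b" "0 < b" for x b
    unfolding h_def using finA[of x] that by (subst Max_less_iff) (auto simp: A_def)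
  have h_mono: "h x \<le> h y" if "x \<le> y" for x y
    unfolding h_def using finA[of y] that by (intro Max_mono) (auto simp: A_def)
  have M0: "0 < M" by (simp add: M_def)
  have mono1: "kf a < kf b" if "a < m" "b < m" "p ! a < p ! b" for a b
    using that M0 by (simp add: kf_def)
  have mono2: "kf (d + a) < kf (d + b)" if ab: "a < m" "b < m" "p ! a < p ! b" for a b
  proof (cases "d + a < m")
    case True
    note Ta = True
    show ?thesis
    proof (cases "d + b < m")
      case True
      then show ?thesis using Ta ovl[of a b] ab M0 by (simp add: kf_def)
    next
      case False
      have "p ! (d + a) \<le> h (p ! b)" using h_ge[of a "p ! b"] Ta ab by (simp add: add.commute)
      then have "p ! (d + a) * M \<le> h (p ! b) * M" by (rule mult_le_mono1)
      moreover have "1 \<le> p ! b" using pr ab by simp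
      moreover have "kf (d + a) = p ! (d + a) * M" using Ta by (simp add: kf_def)
      moreover have "kf (d + b) = h (p ! b) * M + p ! b" using False by (simp add: kf_def)
      ultimately show ?thesis by linarith
    qed
  next
    case False
    note Fa = False
    show ?thesis
    proof (cases "d + b < m")
      case True
      have "h (p ! a) < p ! (d + b)"
      proof (rule h_lt)
        fix i assume "i < m - d" "p ! i < p ! a"
        then show "p ! (i + d) < p ! (d + b)" using ovl[of i b] True ab by (simp add: add.commute)
      next
        show "0 < p ! (d + b)" using pr[of "d + b"] True by simp
      qed
      then have "(h (p ! a) + 1) * M \<le> p ! (d + b) * M" by (intro mult_le_mono1) simp
      moreover have "p ! a < M" using pr[of a] ab by (simp add: M_def)
      moreover have "kf (d + a) = h (p ! a) * M + p ! a" using Fa by (simp add: kf_def)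
      moreover have "kf (d + b) = p ! (d + b) * M" using True by (simp add: kf_def)
      ultimately show ?thesis by (simp add: algebra_simps)
    next
      case False
      have "h (p ! a) * M \<le> h (p ! b) * M" using h_mono[of "p ! a" "p ! b"] ab by (simp add: mult_le_mono1)
      moreover have "kf (d + a) = h (p ! a) * M + p ! a" using Fa by (simp add: kf_def)
      moreover have "kf (d + b) = h (p ! b) * M + p ! b" using False by (simp add: kf_def)
      ultimately show ?thesis using ab by linarith
    qed
  qed
  have kmod: "kf a mod M = (if a < m then 0 else p ! (a - d))" if "a < m + d" for a
  proof (cases "a < m")
    case False
    have "a - d < m" using that False d by arith
    then have "p ! (a - d) < M" using pr[of "a - d"] by (simp add: M_def)
    then show ?thesis using False by (simp add: kf_def)
  qed (simp add: kf_def)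
  have inj: "inj_on kf {0..<m + d}"
  proof (rule inj_onI)
    fix a b assume a: "a \<in> {0..<m + d}" and b: "b \<in> {0..<m + d}" and e: "kf a = kf b"
    have dp: "distinct p" using p by (simp add: perms_def)
    have ma: "kf a mod M = kf b mod M" using e by simp
    show "a = b"
    proof (cases "a < m")
      case True
      note Ta = True
      show ?thesis
      proof (cases "b < m")
        case True
        then have "p ! a = p ! b" using Ta e M0 by (simp add: kf_def)
        then show ?thesis using Ta True dp lp by (simp add: nth_eq_iff_index_eq)
      next
        case False
        have "b - d < m" using b d by auto
        then show ?thesis using ma kmod[of a] kmod[of b] a b Ta False pr[of "b - d"] by simp
      qed
    next
      case False
      note Fa = False
      show ?thesis
      proof (cases "b < m")
        case True
        have "a - d < m" using a d by auto
        then show ?thesis using ma kmod[of a] kmod[of b] a b Fa True pr[of "a - d"] by simp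
      next
        case False
        then have "p ! (a - d) = p ! (b - d)" using ma kmod[of a] kmod[of b] a b Fa by simp
        moreover have "a - d < m" "b - d < m" using a b d by auto
        ultimately have "a - d = b - d" using dp lp by (simp add: nth_eq_iff_index_eq)
        then show ?thesis using Fa False d by simp
      qed
    qed
  qed
  have dK: "distinct K" unfolding K_def using inj by (simp add: distinct_map)
  have lK: "length K = m + d" by (simp add: K_def)
  have Kn: "K ! a = kf a" if "a < m + d" for a using that by (simp add: K_def)
  define q where "q = st K"
  have "q \<in> perms (m + d)" unfolding q_def using st_perms[OF dK] lK by simp
  moreover have "st (take m q) = p"
    unfolding q_def st_take_st
  proof (rule st_eqI)
    show "p \<in> perms (length (take m K))" using p lK by simp
    fix i j assume "i < length (take m K)" "j < length (take m K)" "p ! i < p ! j"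
    then show "take m K ! i < take m K ! j" using lK Kn mono1 by simp
  qed
  moreover have "st (take m (drop d q)) = p"
    unfolding q_def st_take_drop_st
  proof (rule st_eqI)
    show "p \<in> perms (length (take m (drop d K)))" using p lK by simp
    fix i j assume "i < length (take m (drop d K))" "j < length (take m (drop d K))" "p ! i < p ! j"
    then show "take m (drop d K) ! i < take m (drop d K) ! j" using lK Kn mono2 by simp
  qed
  ultimately have "q \<in> Q p d" using lp by (simp add: Q_def)
  then show ?thesis by blast
qed

lemma Q_overlap:
  assumes p: "p \<in> perms m" and d: "d < m" and qQ: "q \<in> Q p d"
  shows "st (drop d p) = st (take (m - d) p)"
proof -
  have lp: "length p = m" using p by (rule perms_length)
  have q1: "st (take m q) = p" and q2: "st (take m (drop d q)) = p" using qQ lp by (auto simp: Q_def)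
  have "st (drop d p) = st (drop d (take m q))" using q1 st_drop_st by metis
  also have "drop d (take m q) = take (m - d) (drop d q)" by (simp add: drop_take)
  also have "st (take (m - d) (drop d q)) = st (take (m - d) (take m (drop d q)))"
    by (simp add: min_def)
  also have "\<dots> = st (take (m - d) p)" using q2 st_take_st by metis
  finally show ?thesis .
qed

definition pairsE :: "nat set \<Rightarrow> (nat \<times> nat) set" where
  "pairsE E = {(i, j) \<in> E \<times> E. i < j}"

lemma pair_count:
  assumes fin: "finite E"
  shows "card (pairsE E) * 2 + card E = card E * card E"
proof -
  let ?P = "pairsE E" and ?P' = "{(i, j) \<in> E \<times> E. j < i}" and ?D = "{(i, j) \<in> E \<times> E. i = j}"
  have finEE: "finite (E \<times> E)" using fin by simp
  have split: "E \<times> E = ?P \<union> (?P' \<union> ?D)" unfolding pairsE_def by auto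
  have fP: "finite ?P" "finite ?P'" "finite ?D" using finEE
    by (auto simp: pairsE_def intro: finite_subset[OF _ finEE])
  have d1: "?P \<inter> (?P' \<union> ?D) = {}" by (auto simp: pairsE_def)
  have d2: "?P' \<inter> ?D = {}" by auto
  have "card (E \<times> E) = card (?P \<union> (?P' \<union> ?D))" using split by (rule arg_cong)
  also have "\<dots> = card ?P + card (?P' \<union> ?D)"
    by (rule card_Un_disjoint) (use fP d1 in auto)
  also have "card (?P' \<union> ?D) = card ?P' + card ?D"
    by (rule card_Un_disjoint) (use fP d2 in auto)
  finally have c1: "card (E \<times> E) = card ?P + (card ?P' + card ?D)" .
  have "?P' = (\<lambda>(i, j). (j, i)) ` ?P" unfolding pairsE_def by auto
  moreover have "inj_on (\<lambda>(i, j). (j, i)) ?P" by (auto simp: inj_on_def)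
  ultimately have c2: "card ?P' = card ?P" by (simp add: card_image)
  have "?D = (\<lambda>x. (x, x)) ` E" by auto
  then have c3: "card ?D = card E" by (simp add: card_image inj_on_def)
  show ?thesis using c1 c2 c3 by (simp add: card_cartesian_product)
qed

lemma sum_ind: "finite A \<Longrightarrow> (\<Sum>x\<in>A. if P x then 1 else 0 :: nat) = card {x \<in> A. P x}"
  by (simp add: sum.inter_filter[symmetric])

lemma sum_group:
  fixes c :: "'a \<Rightarrow> nat"
  assumes fin: "finite A" and bd: "\<And>x. x \<in> A \<Longrightarrow> c x \<le> N"
  shows "(\<Sum>x\<in>A. F (c x) :: nat) = (\<Sum>k\<le>N. F k * card {x \<in> A. c x = k})"
proof -
  have "(\<Sum>x\<in>A. F (c x)) = (\<Sum>x\<in>A. \<Sum>k\<le>N. if c x = k then F k else 0)"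
  proof (rule sum.cong[OF refl])
    fix x assume "x \<in> A"
    have "(\<Sum>k\<le>N. if c x = k then F k else 0) = (if c x \<in> {..N} then F (c x) else 0)"
      by (rule sum.delta') simp
    then show "F (c x) = (\<Sum>k\<le>N. if c x = k then F k else 0)" using bd[OF \<open>x \<in> A\<close>] by simp
  qed
  also have "\<dots> = (\<Sum>k\<le>N. \<Sum>x\<in>A. if c x = k then F k else 0)" by (rule sum.swap)
  also have "\<dots> = (\<Sum>k\<le>N. F k * card {x \<in> A. c x = k})"
    by (rule sum.cong) (use fin in \<open>auto simp: sum.inter_filter[symmetric]\<close>)
  finally show ?thesis .
qed

definition Icnt :: "nat list \<Rightarrow> nat \<Rightarrow> nat" where
  "Icnt p n = (\<Sum>s\<in>perms n. card (pairsE (Em p s)))"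

lemma Em_sub: "s \<in> perms n \<Longrightarrow> Em p s \<subseteq> {1..n + 1 - length p}"
  by (auto simp: Em_def perms_length)

lemma Icnt_anum: "Icnt p n = (\<Sum>k\<le>n + 1. ((k * k - k) div 2) * a_num p n k)"
proof -
  have fE: "finite (Em p s)" if "s \<in> perms n" for s
    using Em_sub[OF that] finite_subset by blast
  have cE: "card (Em p s) \<le> n + 1" if "s \<in> perms n" for s
  proof -
    have "card (Em p s) \<le> n + 1 - length p" using card_mono[OF finite_atLeastAtMost Em_sub[OF that]] by simp
    then show ?thesis by simp
  qed
  have "Icnt p n = (\<Sum>s\<in>perms n. (\<lambda>k. (k * k - k) div 2) (card (Em p s)))"
    unfolding Icnt_def
  proof (rule sum.cong)
    fix s assume "s \<in> perms n"
    then show "card (pairsE (Em p s)) = (\<lambda>k. (k * k - k) div 2) (card (Em p s))"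
      using pair_count[OF fE] by (metis add_diff_cancel_right' div_mult_self_is_m zero_less_numeral)
  qed simp
  also have "\<dots> = (\<Sum>k\<le>n + 1. ((k * k - k) div 2) * card {s \<in> perms n. card (Em p s) = k})"
    by (rule sum_group[OF finite_perms cE])
  finally show ?thesis by (simp add: a_num_def)
qed

definition G :: "nat \<Rightarrow> nat \<Rightarrow> nat \<Rightarrow> nat" where
  "G m e d = (\<Sum>i\<in>{1..e + 1 - d}. card (Xs (m + e) (i - 1) (m + d)))"

lemma card_pairsE_split:
  assumes sub: "E \<subseteq> {1..e + 1}"
  shows "card (pairsE E) = (\<Sum>d\<in>{1..e}. card {i. i \<in> E \<and> i + d \<in> E})"
proof -
  have fin: "finite E" using sub finite_subset by blast
  have "bij_betw (\<lambda>(i, j). (j - i, i)) (pairsE E) (Sigma {1..e} (\<lambda>d. {i. i \<in> E \<and> i + d \<in> E}))"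
  proof (rule bij_betw_byWitness[where f' = "\<lambda>(d, i). (i, i + d)"])
    show "\<forall>a\<in>pairsE E. (\<lambda>(d, i). (i, i + d)) ((\<lambda>(i, j). (j - i, i)) a) = a"
      by (auto simp: pairsE_def)
    show "\<forall>a\<in>Sigma {1..e} (\<lambda>d. {i. i \<in> E \<and> i + d \<in> E}). (\<lambda>(i, j). (j - i, i)) ((\<lambda>(d, i). (i, i + d)) a) = a"
      by auto
    show "(\<lambda>(i, j). (j - i, i)) ` pairsE E \<subseteq> Sigma {1..e} (\<lambda>d. {i. i \<in> E \<and> i + d \<in> E})"
    proof
      fix x assume "x \<in> (\<lambda>(i, j). (j - i, i)) ` pairsE E"
      then obtain i j where ij: "i \<in> E" "j \<in> E" "i < j" "x = (j - i, i)" by (auto simp: pairsE_def)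
      have "1 \<le> i" "j \<le> e + 1" using ij sub by auto
      then show "x \<in> Sigma {1..e} (\<lambda>d. {i. i \<in> E \<and> i + d \<in> E})" using ij by auto
    qed
    show "(\<lambda>(d, i). (i, i + d)) ` Sigma {1..e} (\<lambda>d. {i. i \<in> E \<and> i + d \<in> E}) \<subseteq> pairsE E"
      by (auto simp: pairsE_def)
  qed
  then have "card (pairsE E) = card (Sigma {1..e} (\<lambda>d. {i. i \<in> E \<and> i + d \<in> E}))"
    by (rule bij_betw_same_card)
  also have "\<dots> = (\<Sum>d\<in>{1..e}. card {i. i \<in> E \<and> i + d \<in> E})"
    by (rule card_SigmaI) (use fin in auto)
  finally show ?thesis .
qed

lemma Icnt_Q:
  assumes m: "length p = m"
  shows "Icnt p (m + e) = (\<Sum>d\<in>{1..e}. card (Q p d) * G m e d)"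
proof -
  let ?n = "m + e"
  let ?P = "\<lambda>s d i. i \<in> Em p s \<and> i + d \<in> Em p s"
  have step1: "card (pairsE (Em p s)) =
      (\<Sum>d\<in>{1..e}. \<Sum>i\<in>{1..e + 1 - d}. if ?P s d i then 1 else 0)" if s: "s \<in> perms ?n" for s
  proof -
    have sub: "Em p s \<subseteq> {1..e + 1}" using Em_sub[OF s, of p] m by simp
    have "card (pairsE (Em p s)) = (\<Sum>d\<in>{1..e}. card {i. ?P s d i})"
      by (rule card_pairsE_split[OF sub])
    also have "\<dots> = (\<Sum>d\<in>{1..e}. \<Sum>i\<in>{1..e + 1 - d}. if ?P s d i then 1 else 0)"
    proof (rule sum.cong)
      fix d assume d: "d \<in> {1..e}"
      have "{i. ?P s d i} = {i \<in> {1..e + 1 - d}. ?P s d i}" using sub d by auto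
      then show "card {i. ?P s d i} = (\<Sum>i\<in>{1..e + 1 - d}. if ?P s d i then 1 else 0)"
        by (simp add: sum_ind)
    qed simp
    finally show ?thesis .
  qed
  have "Icnt p ?n = (\<Sum>s\<in>perms ?n. \<Sum>d\<in>{1..e}. \<Sum>i\<in>{1..e + 1 - d}. if ?P s d i then 1 else 0)"
    unfolding Icnt_def by (rule sum.cong) (simp_all add: step1)
  also have "\<dots> = (\<Sum>d\<in>{1..e}. \<Sum>s\<in>perms ?n. \<Sum>i\<in>{1..e + 1 - d}. if ?P s d i then 1 else 0)"
    by (rule sum.swap)
  also have "\<dots> = (\<Sum>d\<in>{1..e}. \<Sum>i\<in>{1..e + 1 - d}. \<Sum>s\<in>perms ?n. if ?P s d i then 1 else 0)"
    by (rule sum.cong[OF refl], rule sum.swap)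
  also have "\<dots> = (\<Sum>d\<in>{1..e}. \<Sum>i\<in>{1..e + 1 - d}. card (Q p d) * card (Xs ?n (i - 1) (m + d)))"
  proof (rule sum.cong[OF refl], rule sum.cong[OF refl])
    fix d i assume d: "d \<in> {1..e}" and i: "i \<in> {1..e + 1 - d}"
    have "(\<Sum>s\<in>perms ?n. if ?P s d i then 1 else 0) = card {s \<in> perms ?n. ?P s d i}"
      by (simp add: sum_ind finite_perms)
    also have "\<dots> = card (Q p d) * card (Xs ?n (i - 1) (length p + d))"
      by (rule card_pairs) (use d i m in auto)
    finally show "(\<Sum>s\<in>perms ?n. if ?P s d i then 1 else 0) = card (Q p d) * card (Xs ?n (i - 1) (m + d))"
      using m by simp
  qed
  also have "\<dots> = (\<Sum>d\<in>{1..e}. card (Q p d) * G m e d)"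
    by (simp add: G_def sum_distrib_left)
  finally show ?thesis .
qed

lemma G_pos: "0 < G m e e"
proof -
  let ?n = "m + e"
  have "set [1..<?n + 1] = {1..?n}" by auto
  then have "[1..<?n + 1] \<in> perms ?n" by (simp add: perms_def del: upt_Suc)
  moreover have "win 0 ?n [1..<?n + 1] = [1..<?n + 1]" by (simp add: win_def del: upt_Suc)
  ultimately have "[1..<?n + 1] \<in> Xs ?n 0 ?n" by (simp add: Xs_def del: upt_Suc)
  moreover have "finite (Xs ?n 0 ?n)" using finite_perms by (simp add: Xs_def)
  ultimately have "0 < card (Xs ?n 0 ?n)" by (auto simp: card_gt_0_iff)
  then show ?thesis by (simp add: G_def)
qed

lemma Q_card_eq:
  assumes lp: "length p = m" and lt: "length t = m"
    and eqI: "\<And>n. Icnt p n = Icnt t n"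
  shows "1 \<le> e \<Longrightarrow> card (Q p e) = card (Q t e)"
proof (induction e rule: less_induct)
  case (less e)
  have split: "{1..e} = insert e {1..<e}" using less.prems by auto
  have rest: "(\<Sum>d\<in>{1..<e}. card (Q p d) * G m e d) = (\<Sum>d\<in>{1..<e}. card (Q t d) * G m e d)"
    by (rule sum.cong) (use less.IH in auto)
  have "(\<Sum>d\<in>{1..e}. card (Q p d) * G m e d) = (\<Sum>d\<in>{1..e}. card (Q t d) * G m e d)"
    using Icnt_Q[OF lp, of e] Icnt_Q[OF lt, of e] eqI by simp
  then have "card (Q p e) * G m e e = card (Q t e) * G m e e"
    unfolding split using rest by simp
  then show ?case using G_pos[of m e] by simp
qed

lemma overlaps_iff_Q:
  assumes p: "p \<in> perms m" and d: "d \<in> {1..m - 1}"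
  shows "(d \<in> overlaps p) = (card (Q p d) \<noteq> 0)"
proof -
  have lp: "length p = m" using p by (rule perms_length)
  have dm: "1 \<le> d" "d < m" using d by auto
  show ?thesis
  proof
    assume "d \<in> overlaps p"
    then have "st (drop d p) = st (take (m - d) p)" using lp by (simp add: overlaps_def)
    then have "Q p d \<noteq> {}" using overlap_Q[OF p dm] by blast
    then show "card (Q p d) \<noteq> 0" using finite_Q by simp
  next
    assume "card (Q p d) \<noteq> 0"
    then obtain q where "q \<in> Q p d" by (metis card.empty ex_in_conv)
    then have "st (drop d p) = st (take (m - d) p)" using Q_overlap[OF p dm(2)] by blast
    then show "d \<in> overlaps p" using lp d by (simp add: overlaps_def)
  qed
qed

theorem corollary2p3:
  fixes m :: nat and p t :: "nat list"
  assumes "p \<in> perms m" and "t \<in> perms m"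
    and "strongly_cwilf_equiv p t"
  shows "overlaps p = overlaps t"
proof -
  have lp: "length p = m" and lt: "length t = m" using assms perms_length by auto
  have eqI: "Icnt p n = Icnt t n" for n
    using assms(3) by (simp add: Icnt_anum strongly_cwilf_equiv_def)
  have sub: "overlaps p \<subseteq> {1..m - 1}" "overlaps t \<subseteq> {1..m - 1}"
    using lp lt by (auto simp: overlaps_def)
  have "d \<in> overlaps p \<longleftrightarrow> d \<in> overlaps t" if d: "d \<in> {1..m - 1}" for d
    using overlaps_iff_Q[OF assms(1) d] overlaps_iff_Q[OF assms(2) d]
      Q_card_eq[OF lp lt eqI, of d] d by simp
  then show ?thesis using sub by blast
qed

end
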